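(* Let $G=G_1*\cdots*G_r$ ($r\ge2$) be a free product of finite connected simple rooted graphs $G_i=(V_i,E_i,o_i)$ with $|V_i|\ge2$. Then each $\mathcal M_i$ is a polynomial with nonnegative integer coefficients of degree at most $|V_i|-1$, $1/\mu(G)$ is the smallest positive zero of the polynomial $$D(z)=\prod_{k=1}^r\bigl(1+\mathcal M_k(z)\bigr)-\sum_{i=1}^r\mathcal M_i(z)\prod_{j\ne i}\bigl(1+\mathcal M_j(z)\bigr)$$ (for $r=2$, of $1-\mathcal M_1(z)\mathcal M_2(z)$), and in particular the connective constant $\mu(G)$ is an algebraic number.
   Context: Free product of graphs: let $G_1=(V_1,E_1,o_1),\dots,G_r=(V_r,E_r,o_r)$ be rooted graphs with pairwise distinct vertex sets, $\mathcal I=\{1,\dots,r\}$, and $V_i^\times=V_i\setminus\{o_i\}$; set $\tau(x)=i$ for $x\in V_i^\times$. The vertex set $V$ consists of the empty word $o$ together with all finite words $x_1x_2\cdots x_n$ with letters $x_j\in\bigcup_i V_i^\times$ such that $\tau(x_j)\neq\tau(x_{j+1})$; set $\tau(x_1\cdots x_n)=\tau(x_n)$. Each $V_i$ is regarded as a subset of $V$ with $o_i$ identified with $o$, and concatenation $wx$ is defined when the last letter of $w$ and first letter of $x$ have different types (with $wo_i=w$ if $\tau(w)\ne i$). Edges: for $i\in\mathcal I$ and $x,y\in V_i$ with $x\sim y$ in $G_i$, put an edge $wx\sim wy$ for every $w\in V$ with $\tau(w)\neq i$. The free product is $G=(V,E,o)$. A self-avoiding walk (SAW) of length $n$ from a vertex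 is a path $[v_0,\dots,v_n]$ of adjacent vertices starting at that vertex with no vertex repeated. $\sigma_n$ is the number of $n$-step SAWs in $G$ starting at $o$, $\sigma_n^{(i)}$ the number of $n$-step SAWs in $G_i$ starting at $o_i$, $\mathcal M_i(z)=\sum_{n\ge1}\sigma^{(i)}_n z^n$, and $\mu(G)=\lim_{n\to\infty}\sigma_n^{1/n}$ is the connective constant. *)

theory Defs
  imports "HOL-Analysis.Analysis" "HOL-Computational_Algebra.Polynomial"
begin

definition saw_count :: "'v set \<Rightarrow> ('v \<Rightarrow> 'v \<Rightarrow> bool) \<Rightarrow> 'v \<Rightarrow> nat \<Rightarrow> nat" where
  "saw_count V adj s n = card {p. length p = Suc n \<and> hd p = s \<and> distinct p \<and> set p \<subseteq> V
                                 \<and> (\<forall>j<n. adj (p ! j) (p ! Suc j))}"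

text \<open>To make vertex sets
  pairwise disjoint, a letter x \<in> V i - {rt i} is tagged as (i, x); its type is i.\<close>
definition fp_vertices :: "(nat \<Rightarrow> 'a set) \<Rightarrow> (nat \<Rightarrow> 'a) \<Rightarrow> nat \<Rightarrow> (nat \<times> 'a) list set" where
  "fp_vertices V rt r = {w. (\<forall>(i, x) \<in> set w. i < r \<and> x \<in> V i \<and> x \<noteq> rt i)
                           \<and> (\<forall>j. Suc j < length w \<longrightarrow> fst (w ! j) \<noteq> fst (w ! Suc j))}"

definition fp_emb :: "(nat \<Rightarrow> 'a) \<Rightarrow> nat \<Rightarrow> 'a \<Rightarrow> (nat \<times> 'a) list" where
  "fp_emb rt i x = (if x = rt i then [] else [(i, x)])"

definition fp_adj :: "(nat \<Rightarrow> 'a set) \<Rightarrow> (nat \<Rightarrow> 'a \<Rightarrow> 'a \<Rightarrow> bool) \<Rightarrow> (nat \<Rightarrow> 'a) \<Rightarrow> nat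
                      \<Rightarrow> (nat \<times> 'a) list \<Rightarrow> (nat \<times> 'a) list \<Rightarrow> bool" where
  "fp_adj V E rt r w w' \<longleftrightarrow>
     (\<exists>u i x y. i < r \<and> u \<in> fp_vertices V rt r \<and> (u = [] \<or> fst (last u) \<noteq> i)
               \<and> x \<in> V i \<and> y \<in> V i \<and> E i x y
               \<and> w = u @ fp_emb rt i x \<and> w' = u @ fp_emb rt i y)"

definition fp_saw :: "(nat \<Rightarrow> 'a set) \<Rightarrow> (nat \<Rightarrow> 'a \<Rightarrow> 'a \<Rightarrow> bool) \<Rightarrow> (nat \<Rightarrow> 'a) \<Rightarrow> nat \<Rightarrow> nat \<Rightarrow> nat" where
  "fp_saw V E rt r n = saw_count (fp_vertices V rt r) (fp_adj V E rt r) [] n"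

definition fp_connective_constant :: "(nat \<Rightarrow> 'a set) \<Rightarrow> (nat \<Rightarrow> 'a \<Rightarrow> 'a \<Rightarrow> bool) \<Rightarrow> (nat \<Rightarrow> 'a) \<Rightarrow> nat \<Rightarrow> real" where
  "fp_connective_constant V E rt r = lim (\<lambda>n. root n (real (fp_saw V E rt r n)))"

definition Mgf :: "(nat \<Rightarrow> 'a set) \<Rightarrow> (nat \<Rightarrow> 'a \<Rightarrow> 'a \<Rightarrow> bool) \<Rightarrow> (nat \<Rightarrow> 'a) \<Rightarrow> nat \<Rightarrow> real \<Rightarrow> real" where
  "Mgf V E rt i z = (\<Sum>n. real (saw_count (V i) (E i) (rt i) (Suc n)) * z ^ Suc n)"

definition Dfun :: "(nat \<Rightarrow> 'a set) \<Rightarrow> (nat \<Rightarrow> 'a \<Rightarrow> 'a \<Rightarrow> bool) \<Rightarrow> (nat \<Rightarrow> 'a) \<Rightarrow> nat \<Rightarrow> real \<Rightarrow> real" where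
  "Dfun V E rt r z = (\<Prod>k<r. 1 + Mgf V E rt k z)
      - (\<Sum>i<r. Mgf V E rt i z * (\<Prod>j\<in>{..<r} - {i}. 1 + Mgf V E rt j z))"

end

theory Submission
  imports Defs
begin



definition walkset :: "'v set \<Rightarrow> ('v \<Rightarrow> 'v \<Rightarrow> bool) \<Rightarrow> 'v \<Rightarrow> nat \<Rightarrow> 'v list set" where
  "walkset V adj s n = {p. length p = Suc n \<and> hd p = s \<and> distinct p \<and> set p \<subseteq> V
                                 \<and> (\<forall>j<n. adj (p ! j) (p ! Suc j))}"

lemma saw_count_walkset: "saw_count V adj s n = card (walkset V adj s n)"
  by (simp add: saw_count_def walkset_def)

lemma walkset_0: "p \<in> walkset V adj s 0 \<longleftrightarrow> p = [s] \<and> s \<in> V"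
  by (auto simp: walkset_def length_Suc_conv)

lemma walkset_Suc:
  "p \<in> walkset V adj s (Suc n) \<longleftrightarrow>
     (\<exists>p0 w. p = p0 @ [w] \<and> p0 \<in> walkset V adj s n \<and> adj (last p0) w \<and> w \<notin> set p0 \<and> w \<in> V)"
proof
  assume p: "p \<in> walkset V adj s (Suc n)"
  then have len: "length p = Suc (Suc n)" by (simp add: walkset_def)
  then have ne: "p \<noteq> []" by auto
  define p0 where "p0 = butlast p"
  have pe: "p = p0 @ [last p]" using ne by (simp add: p0_def)
  have lp0: "length p0 = Suc n" using len by (simp add: p0_def)
  have nth0: "\<And>j. j < Suc n \<Longrightarrow> p0 ! j = p ! j" using pe lp0 by (metis nth_append)
  have "hd p0 = hd p" using lp0 pe by (metis Zero_not_Suc hd_append length_0_conv)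
  moreover have "distinct p0" using p by (simp add: walkset_def p0_def distinct_butlast)
  moreover have "set p0 \<subseteq> V" using p pe by (auto simp: walkset_def) (metis Un_iff set_append subsetD)
  moreover have "\<forall>j<n. adj (p0 ! j) (p0 ! Suc j)" using p nth0 by (auto simp: walkset_def)
  ultimately have "p0 \<in> walkset V adj s n" using p lp0 by (auto simp: walkset_def)
  moreover have "last p0 = p ! n" using lp0 nth0
    by (metis diff_Suc_1 last_conv_nth lessI list.size(3) nat.distinct(1))
  moreover have "last p = p ! Suc n" using len by (metis diff_Suc_1 last_conv_nth list.size(3) nat.distinct(1))
  moreover have "adj (p ! n) (p ! Suc n)" using p by (auto simp: walkset_def)
  moreover have "last p \<notin> set p0" using p pe by (auto simp: walkset_def) (metis distinct_append pe disjoint_iff list.set_intros(1))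
  moreover have "last p \<in> V" using p ne by (auto simp: walkset_def)
  ultimately show "\<exists>p0 w. p = p0 @ [w] \<and> p0 \<in> walkset V adj s n \<and> adj (last p0) w \<and> w \<notin> set p0 \<and> w \<in> V"
    using pe by metis
next
  assume "\<exists>p0 w. p = p0 @ [w] \<and> p0 \<in> walkset V adj s n \<and> adj (last p0) w \<and> w \<notin> set p0 \<and> w \<in> V"
  then obtain p0 w where pe: "p = p0 @ [w]" and p0: "p0 \<in> walkset V adj s n" and a: "adj (last p0) w"
    and nw: "w \<notin> set p0" and wV: "w \<in> V" by blast
  have lp0: "length p0 = Suc n" using p0 by (simp add: walkset_def)
  have "hd p = s" using p0 pe lp0 by (auto simp: walkset_def hd_append)
  moreover have "\<forall>j<Suc n. adj (p ! j) (p ! Suc j)"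
  proof (intro allI impI)
    fix j assume j: "j < Suc n"
    show "adj (p ! j) (p ! Suc j)"
    proof (cases "j < n")
      case True then show ?thesis using p0 lp0 pe by (auto simp: walkset_def nth_append)
    next
      case False
      then have "j = n" using j by auto
      moreover have "last p0 = p0 ! n" using lp0 by (metis diff_Suc_1 last_conv_nth list.size(3) nat.distinct(1))
      ultimately show ?thesis using a pe lp0 by (simp add: nth_append)
    qed
  qed
  ultimately show "p \<in> walkset V adj s (Suc n)" using p0 pe nw wV lp0 by (auto simp: walkset_def)
qed




locale fp =
  fixes V :: "nat \<Rightarrow> 'a set" and E :: "nat \<Rightarrow> 'a \<Rightarrow> 'a \<Rightarrow> bool" and rt :: "nat \<Rightarrow> 'a" and r :: nat
  assumes r2: "r \<ge> 2"
    and fin: "\<And>i. i < r \<Longrightarrow> finite (V i)"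
    and card2: "\<And>i. i < r \<Longrightarrow> card (V i) \<ge> 2"
    and root: "\<And>i. i < r \<Longrightarrow> rt i \<in> V i"
    and edges_in: "\<And>i x y. i < r \<Longrightarrow> E i x y \<Longrightarrow> x \<in> V i \<and> y \<in> V i"
    and sym: "\<And>i x y. i < r \<Longrightarrow> E i x y \<Longrightarrow> E i y x"
    and irrefl: "\<And>i x. i < r \<Longrightarrow> \<not> E i x x"
    and conn: "\<And>i x. i < r \<Longrightarrow> x \<in> V i \<Longrightarrow> (E i)\<^sup>*\<^sup>* (rt i) x"
begin

abbreviation "FV \<equiv> fp_vertices V rt r"
abbreviation "FA \<equiv> fp_adj V E rt r"
abbreviation "emb \<equiv> fp_emb rt"

lemma emb_FV: "i < r \<Longrightarrow> x \<in> V i \<Longrightarrow> emb i x \<in> FV"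
  by (auto simp: fp_emb_def fp_vertices_def)

lemma emb_inj: "emb i x = emb i y \<Longrightarrow> x = y"
  by (auto simp: fp_emb_def split: if_splits)

lemma emb_len: "length (emb i x) \<le> 1"
  by (simp add: fp_emb_def)

lemma emb_root[simp]: "emb i (rt i) = []"
  by (simp add: fp_emb_def)

lemma emb_nonroot: "x \<noteq> rt i \<Longrightarrow> emb i x = [(i, x)]"
  by (simp add: fp_emb_def)

lemma Nil_FV[simp]: "[] \<in> FV"
  by (simp add: fp_vertices_def)

lemma adj_emb: "i < r \<Longrightarrow> E i x y \<Longrightarrow> FA (emb i x) (emb i y)"
  unfolding fp_adj_def
  apply (rule exI[of _ "[]"], rule exI[of _ i], rule exI[of _ x], rule exI[of _ y])
  using edges_in by auto

lemma FV_tail: "b # w \<in> FV \<Longrightarrow> w \<in> FV"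
  unfolding fp_vertices_def apply (auto simp: nth_Cons_Suc) done

lemma FV_Cons:
  assumes "w \<in> FV" "fst b < r" "snd b \<in> V (fst b)" "snd b \<noteq> rt (fst b)"
    and "w = [] \<or> fst (hd w) \<noteq> fst b"
  shows "b # w \<in> FV"
proof -
  have "\<forall>j. Suc j < length (b # w) \<longrightarrow> fst ((b # w) ! j) \<noteq> fst ((b # w) ! Suc j)"
  proof (intro allI impI)
    fix j assume j: "Suc j < length (b # w)"
    show "fst ((b # w) ! j) \<noteq> fst ((b # w) ! Suc j)"
    proof (cases j)
      case 0 then show ?thesis using assms(5) j by (auto simp: hd_conv_nth)
    next
      case (Suc j') then show ?thesis using assms(1) j by (auto simp: fp_vertices_def)
    qed
  qed
  then show ?thesis using assms by (cases b) (auto simp: fp_vertices_def)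
qed

lemma FA_unfold:
  assumes "FA w w'"
  obtains u l x y where "l < r" "u \<in> FV" "u = [] \<or> fst (last u) \<noteq> l" "x \<in> V l" "y \<in> V l"
    "E l x y" "w = u @ emb l x" "w' = u @ emb l y"
  using assms unfolding fp_adj_def by blast

lemma FA_len: "FA w w' \<Longrightarrow> length w' \<le> Suc (length w)"
proof (erule FA_unfold)
  fix u l x y assume "w = u @ emb l x" "w' = u @ emb l y"
  moreover have "length (emb l y) \<le> 1" by (rule emb_len)
  ultimately show "length w' \<le> Suc (length w)" by simp
qed

lemma FA_hd: "FA w w' \<Longrightarrow> w \<noteq> [] \<Longrightarrow> w' \<noteq> [] \<Longrightarrow> fst (hd w) = fst (hd w')"
  by (erule FA_unfold) (auto simp: fp_emb_def hd_append split: if_splits)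

lemma N0:
  assumes "FA [] w"
  shows "\<exists>j<r. \<exists>y\<in>V j. y \<noteq> rt j \<and> E j (rt j) y \<and> w = [(j, y)]"
  using assms
proof (rule FA_unfold)
  fix u l x y assume *: "l < r" "x \<in> V l" "y \<in> V l" "E l x y" "[] = u @ emb l x" "w = u @ emb l y"
  have u: "u = []" using *(5) by simp
  have x: "x = rt l" using *(5) by (simp add: fp_emb_def split: if_splits)
  have y: "y \<noteq> rt l" using irrefl[OF *(1)] *(4) x by metis
  have "w = [(l, y)]" using *(6) u y by (simp add: fp_emb_def)
  then show ?thesis using * x y by blast
qed

lemma N1:
  assumes "FA [(i, a)] w"
  shows "(\<exists>b\<in>V i. E i a b \<and> w = emb i b)
       \<or> (\<exists>j y. j < r \<and> j \<noteq> i \<and> y \<in> V j \<and> y \<noteq> rt j \<and> E j (rt j) y \<and> w = [(i, a), (j, y)])"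
  using assms
proof (rule FA_unfold)
  fix u l x y assume *: "l < r" "u = [] \<or> fst (last u) \<noteq> l" "x \<in> V l" "y \<in> V l" "E l x y"
     "[(i, a)] = u @ emb l x" "w = u @ emb l y"
  show ?thesis
  proof (cases u)
    case Nil
    then have e: "emb l x = [(i, a)]" using *(6) by simp
    have "x \<noteq> rt l" using e by (simp add: fp_emb_def split: if_splits)
    then have "l = i" "x = a" using e by (simp_all add: fp_emb_def)
    then have "y \<in> V i \<and> E i a y \<and> w = emb i y" using *(4,5,7) Nil by simp
    then show ?thesis by blast
  next
    case (Cons c u')
    have lu: "length u + length (emb l x) = 1" using arg_cong[OF *(6), of length] by simp
    then have "emb l x = []" using Cons by simp
    then have u: "u = [(i, a)]" using *(6) by simp
    have x: "x = rt l" using \<open>emb l x = []\<close> by (simp add: fp_emb_def split: if_splits)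
    have li: "l \<noteq> i" using *(2) u by simp
    have y: "y \<noteq> rt l" using irrefl[OF *(1)] *(5) x by metis
    have "w = [(i, a), (l, y)]" using *(7) u y by (simp add: fp_emb_def)
    then show ?thesis using *(1,4,5) x y li by blast
  qed
qed

lemma N2:
  assumes "FA (b # w0) w" "w0 \<noteq> []"
  shows "\<exists>w1. w = b # w1 \<and> FA w0 w1"
  using assms(1)
proof (rule FA_unfold)
  fix u l x y assume *: "l < r" "u \<in> FV" "u = [] \<or> fst (last u) \<noteq> l" "x \<in> V l" "y \<in> V l" "E l x y"
     "b # w0 = u @ emb l x" "w = u @ emb l y"
  have "u \<noteq> []"
  proof
    assume "u = []"
    then have "length (b # w0) \<le> 1" using *(7) emb_len by simp
    then show False using assms(2) by simp
  qed
  then obtain u0 where u: "u = b # u0" using *(7) by (cases u) auto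
  then have w0: "w0 = u0 @ emb l x" using *(7) by simp
  have "u0 \<in> FV" using *(2) u FV_tail by blast
  moreover have "u0 = [] \<or> fst (last u0) \<noteq> l" using *(3) u by auto
  ultimately have "FA w0 (u0 @ emb l y)" unfolding fp_adj_def using * w0 by blast
  then show ?thesis using *(8) u by auto
qed

lemma Pref:
  assumes "FA w w'" "w \<noteq> []" "w' \<noteq> []" "fst (hd w) \<noteq> fst b"
    and b: "fst b < r" "snd b \<in> V (fst b)" "snd b \<noteq> rt (fst b)"
  shows "FA (b # w) (b # w')"
  using assms(1)
proof (rule FA_unfold)
  fix u l x y assume *: "l < r" "u \<in> FV" "u = [] \<or> fst (last u) \<noteq> l" "x \<in> V l" "y \<in> V l" "E l x y"
     "w = u @ emb l x" "w' = u @ emb l y"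
  show ?thesis
  proof (cases u)
    case Nil
    then have "emb l x \<noteq> []" using *(7) assms(2) by simp
    then have "x \<noteq> rt l" by auto
    then have "l \<noteq> fst b" using *(7) Nil assms(4) by (simp add: fp_emb_def)
    then have "[b] \<in> FV" "fst (last [b]) \<noteq> l" using FV_Cons[OF Nil_FV b] by auto
    then show ?thesis unfolding fp_adj_def using * Nil by (intro exI[of _ "[b]"] exI[of _ l] exI[of _ x] exI[of _ y]) auto
  next
    case (Cons c u')
    then have "fst (hd u) \<noteq> fst b" using *(7) assms(4) by simp
    then have "b # u \<in> FV" using FV_Cons[OF *(2) b] by auto
    moreover have "fst (last (b # u)) \<noteq> l" using *(3) Cons by auto
    ultimately show ?thesis unfolding fp_adj_def using * by (intro exI[of _ "b # u"] exI[of _ l] exI[of _ x] exI[of _ y]) auto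
  qed
qed

end



context fp begin

definition SW :: "nat \<Rightarrow> (nat \<times> 'a) list list set" where "SW n = walkset FV FA [] n"
definition T where "T i k = walkset (V i) (E i) (rt i) k"
definition sc where "sc i k = card (T i k)"
definition ST where "ST j n = {p \<in> SW n. 1 \<le> n \<and> fst (hd (p ! 1)) = j}"
definition A where "A j n = card (ST j n)"
definition build where "build i q p' = map (emb i) q @ map (Cons (i, last q)) (tl p')"
definition PP where "PP i m = (if m = 0 then {[[]]} else (\<Union>j\<in>{..<r}-{i}. ST j m))"

lemma SW_D:
  assumes "p \<in> SW n"
  shows "length p = Suc n" "hd p = []" "distinct p" "set p \<subseteq> FV" "\<And>j. j < n \<Longrightarrow> FA (p ! j) (p ! Suc j)"
  using assms by (auto simp: SW_def walkset_def)

lemma SW_nth0: "p \<in> SW n \<Longrightarrow> p ! 0 = []"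
  using SW_D(1,2) by (metis hd_conv_nth list.size(3) nat.distinct(1))

lemma SW_nonempty_nth:
  assumes p: "p \<in> SW n" and t: "1 \<le> t" "t \<le> n"
  shows "p ! t \<noteq> []"
proof
  assume "p ! t = []"
  then have "p ! t = p ! 0" using SW_nth0[OF p] by simp
  moreover have "t < length p" "0 < length p" using SW_D(1)[OF p] t by auto
  ultimately have "t = 0" using SW_D(3)[OF p] nth_eq_iff_index_eq by blast
  then show False using t by simp
qed

lemma SW_type_nth:
  assumes p: "p \<in> SW n"
  shows "1 \<le> t \<Longrightarrow> t \<le> n \<Longrightarrow> fst (hd (p ! t)) = fst (hd (p ! 1))"
proof (induction t)
  case 0 then show ?case by simp
next
  case (Suc t)
  show ?case
  proof (cases "t = 0")
    case True then show ?thesis by simp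
  next
    case False
    have fa: "FA (p ! t) (p ! Suc t)" using SW_D(5)[OF p] Suc.prems by simp
    have ne: "p ! t \<noteq> []" "p ! Suc t \<noteq> []" using SW_nonempty_nth[OF p] Suc.prems False by auto
    have "fst (hd (p ! t)) = fst (hd (p ! Suc t))" using FA_hd[OF fa ne] .
    moreover have "fst (hd (p ! t)) = fst (hd (p ! 1))" using Suc.IH Suc.prems False by simp
    ultimately show ?thesis by simp
  qed
qed

lemma SW_tl:
  assumes p: "p \<in> SW n" and w: "w \<in> set (tl p)"
  shows "w \<noteq> [] \<and> fst (hd w) = fst (hd (p ! 1))"
proof -
  obtain t where t: "t < length (tl p)" "w = tl p ! t" using w by (metis in_set_conv_nth)
  have l: "length p = Suc n" using SW_D(1)[OF p] .
  then have "tl p ! t = p ! Suc t" by (cases p) auto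
  moreover have "1 \<le> Suc t" "Suc t \<le> n" using t l by auto
  ultimately have "w = p ! Suc t" "1 \<le> Suc t" "Suc t \<le> n" using t by auto
  then show ?thesis using SW_nonempty_nth[OF p] SW_type_nth[OF p] by metis
qed

lemma SW_first:
  assumes p: "p \<in> SW n" and n: "1 \<le> n"
  shows "\<exists>j<r. \<exists>y\<in>V j. y \<noteq> rt j \<and> E j (rt j) y \<and> p ! 1 = [(j, y)]"
proof -
  have "FA (p ! 0) (p ! 1)" using SW_D(5)[OF p, of 0] n by simp
  then have "FA [] (p ! 1)" using SW_nth0[OF p] by simp
  then show ?thesis by (rule N0)
qed

lemma SW_len:
  assumes p: "p \<in> SW n"
  shows "t \<le> n \<Longrightarrow> length (p ! t) \<le> t"
proof (induction t)
  case 0 then show ?case using SW_nth0[OF p] by simp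
next
  case (Suc t)
  then have "FA (p ! t) (p ! Suc t)" using SW_D(5)[OF p] by simp
  then have "length (p ! Suc t) \<le> Suc (length (p ! t))" by (rule FA_len)
  then show ?case using Suc by simp
qed

lemma finite_SW: "finite (SW n)"
proof -
  define L where "L = Sigma {..<r} V"
  have fL: "finite L" unfolding L_def using fin by (intro finite_SigmaI) auto
  define W where "W = {w. set w \<subseteq> L \<and> length w \<le> n}"
  have fW: "finite W" unfolding W_def using fL by (rule finite_lists_length_le)
  have "SW n \<subseteq> {p. set p \<subseteq> W \<and> length p = Suc n}"
  proof (rule subsetI, rule CollectI, rule conjI)
    fix p assume p: "p \<in> SW n"
    show "set p \<subseteq> W"
    proof
    fix w assume w: "w \<in> set p"
    then obtain t where t: "t < length p" "w = p ! t" by (metis in_set_conv_nth)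
    then have "length w \<le> n" using SW_len[OF p, of t] SW_D(1)[OF p] by simp
    moreover have "w \<in> FV" using SW_D(4)[OF p] w by auto
    then have "set w \<subseteq> L" unfolding L_def fp_vertices_def by auto
    ultimately show "w \<in> W" unfolding W_def by simp
    qed
    show "length p = Suc n" using SW_D(1)[OF p] by simp
  qed
  moreover have "finite {p. set p \<subseteq> W \<and> length p = Suc n}" using fW by (rule finite_lists_length_eq)
  ultimately show ?thesis by (rule finite_subset)
qed

lemma T_D:
  assumes "q \<in> T i k"
  shows "length q = Suc k" "hd q = rt i" "distinct q" "set q \<subseteq> V i" "\<And>j. j < k \<Longrightarrow> E i (q ! j) (q ! Suc j)"
  using assms by (auto simp: T_def walkset_def)

lemma finite_T: "i < r \<Longrightarrow> finite (T i k)"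
proof -
  assume i: "i < r"
  have "T i k \<subseteq> {q. set q \<subseteq> V i \<and> length q = Suc k}" by (auto simp: T_def walkset_def)
  moreover have "finite {q. set q \<subseteq> V i \<and> length q = Suc k}" using fin[OF i] by (rule finite_lists_length_eq)
  ultimately show ?thesis by (rule finite_subset)
qed

lemma T_empty: "i < r \<Longrightarrow> card (V i) \<le> k \<Longrightarrow> T i k = {}"
proof (rule ccontr)
  assume i: "i < r" and k: "card (V i) \<le> k" and "T i k \<noteq> {}"
  then obtain q where q: "q \<in> T i k" by blast
  have "card (set q) = Suc k" using T_D(1,3)[OF q] distinct_card by metis
  moreover have "card (set q) \<le> card (V i)" using T_D(4)[OF q] fin[OF i] card_mono by blast
  ultimately show False using k by simp
qed

lemma sc_zero: "i < r \<Longrightarrow> card (V i) \<le> k \<Longrightarrow> sc i k = 0"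
  using T_empty by (simp add: sc_def)

lemma T1_ex: "i < r \<Longrightarrow> \<exists>y. E i (rt i) y"
proof -
  assume i: "i < r"
  have "\<exists>x\<in>V i. x \<noteq> rt i"
  proof (rule ccontr)
    assume "\<not> ?thesis"
    then have "V i \<subseteq> {rt i}" by auto
    then have "card (V i) \<le> card {rt i}" by (intro card_mono) auto
    then have "card (V i) \<le> 1" by simp
    then show False using card2[OF i] by simp
  qed
  then obtain x where x: "x \<in> V i" "x \<noteq> rt i" by blast
  have "(E i)\<^sup>*\<^sup>* (rt i) x" using conn[OF i x(1)] .
  then show ?thesis using x(2) by (metis converse_rtranclpE)
qed

lemma sc1: "i < r \<Longrightarrow> 1 \<le> sc i 1"
proof -
  assume i: "i < r"
  obtain y where y: "E i (rt i) y" using T1_ex[OF i] by blast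
  then have yV: "y \<in> V i" and yr: "y \<noteq> rt i" using edges_in[OF i y] irrefl[OF i] by auto
  have "[rt i, y] \<in> T i 1" unfolding T_def using y yV yr root[OF i]
    by (auto simp: walkset_def)
  then have "T i 1 \<noteq> {}" by blast
  then show ?thesis unfolding sc_def using finite_T[OF i] by (simp add: Suc_leI card_gt_0_iff)
qed

lemma sc0: "i < r \<Longrightarrow> sc i 0 = 1"
proof -
  assume i: "i < r"
  have "T i 0 = {[rt i]}" unfolding T_def using root[OF i] by (simp add: set_eq_iff walkset_0)
  then show ?thesis by (simp add: sc_def)
qed

end



context fp begin

lemma SW_Suc: "p \<in> SW (Suc n) \<longleftrightarrow> (\<exists>p0 w. p = p0 @ [w] \<and> p0 \<in> SW n \<and> FA (last p0) w \<and> w \<notin> set p0 \<and> w \<in> FV)"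
  unfolding SW_def by (rule walkset_Suc)

lemma T_Suc: "q \<in> T i (Suc k) \<longleftrightarrow> (\<exists>q0 b. q = q0 @ [b] \<and> q0 \<in> T i k \<and> E i (last q0) b \<and> b \<notin> set q0 \<and> b \<in> V i)"
  unfolding T_def by (rule walkset_Suc)

lemma SW_0: "p \<in> SW 0 \<longleftrightarrow> p = [[]]"
  unfolding SW_def by (simp add: walkset_0)

lemma T_0: "i < r \<Longrightarrow> q \<in> T i 0 \<longleftrightarrow> q = [rt i]"
  unfolding T_def using root by (simp add: walkset_0)

lemma nth1_snoc: "2 \<le> length p0 \<Longrightarrow> (p0 @ [w]) ! 1 = p0 ! 1"
  by (simp add: nth_append)

lemma lastq:
  assumes i: "i < r" and q: "q \<in> T i k" and k: "1 \<le> k"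
  shows "last q \<in> V i" "last q \<noteq> rt i"
proof -
  have l: "length q = Suc k" using T_D(1)[OF q] .
  then have ne: "q \<noteq> []" by auto
  then show "last q \<in> V i" using T_D(4)[OF q] by auto
  have "last q = q ! k" using l ne by (simp add: last_conv_nth)
  moreover have "hd q = q ! 0" using ne by (simp add: hd_conv_nth)
  moreover have "q ! k \<noteq> q ! 0"
  proof
    assume "q ! k = q ! 0"
    moreover have "k < length q" "0 < length q" using l by auto
    ultimately have "k = 0" using T_D(3)[OF q] nth_eq_iff_index_eq by blast
    then show False using k by simp
  qed
  ultimately show "last q \<noteq> rt i" using T_D(2)[OF q] by simp
qed

lemma last_map_emb: "q \<noteq> [] \<Longrightarrow> last q \<noteq> rt i \<Longrightarrow> last (map (emb i) q) = [(i, last q)]"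
  by (simp add: last_map emb_nonroot)

lemma ST_D: "p \<in> ST j n \<Longrightarrow> p \<in> SW n \<and> 1 \<le> n \<and> fst (hd (p ! 1)) = j"
  by (simp add: ST_def)

lemma ST_I: "p \<in> SW n \<Longrightarrow> 1 \<le> n \<Longrightarrow> fst (hd (p ! 1)) = j \<Longrightarrow> p \<in> ST j n"
  by (simp add: ST_def)

lemma B1:
  assumes i: "i < r"
  shows "q \<in> T i k \<Longrightarrow> 1 \<le> k \<Longrightarrow> map (emb i) q \<in> ST i k"
proof (induction k arbitrary: q)
  case 0 then show ?case by simp
next
  case (Suc k)
  obtain q0 b where qe: "q = q0 @ [b]" and q0: "q0 \<in> T i k" and e: "E i (last q0) b"
    and nb: "b \<notin> set q0" and bV: "b \<in> V i" using Suc.prems(1) T_Suc by blast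
  show ?case
  proof (cases "k = 0")
    case True
    then have q0e: "q0 = [rt i]" using q0 T_0[OF i] by simp
    then have br: "b \<noteq> rt i" using nb by simp
    have me: "map (emb i) q = [[], [(i, b)]]" using qe q0e br by (simp add: emb_nonroot)
    have "FA [] [(i, b)]" using adj_emb[OF i e] q0e br by (simp add: emb_nonroot)
    moreover have "[(i, b)] \<in> FV" using emb_FV[OF i bV] br by (simp add: emb_nonroot)
    ultimately have "[[], [(i, b)]] \<in> SW (Suc 0)" unfolding SW_Suc
      by (intro exI[of _ "[[]]"] exI[of _ "[(i, b)]"]) (simp add: SW_0)
    then show ?thesis using me True by (intro ST_I) auto
  next
    case False
    have IH: "map (emb i) q0 \<in> ST i k" using Suc.IH[OF q0] False by simp
    have lq0: "length q0 = Suc k" using T_D(1)[OF q0] .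
    have me: "map (emb i) q = map (emb i) q0 @ [emb i b]" using qe by simp
    have "q0 \<noteq> []" using lq0 by auto
    then have "last (map (emb i) q0) = emb i (last q0)" by (simp add: last_map)
    then have fa: "FA (last (map (emb i) q0)) (emb i b)" using adj_emb[OF i e] by simp
    have nin: "emb i b \<notin> set (map (emb i) q0)" using nb emb_inj by auto
    have "map (emb i) q \<in> SW (Suc k)" unfolding SW_Suc using me ST_D[OF IH] fa nin emb_FV[OF i bV] by blast
    moreover have "(map (emb i) q) ! 1 = (map (emb i) q0) ! 1" using me lq0 False
      by (simp add: nth_append)
    ultimately show ?thesis using ST_D[OF IH] by (intro ST_I) auto
  qed
qed

lemma build_Nil: "build i q [[]] = map (emb i) q"
  by (simp add: build_def)

lemma build_snoc: "p0 \<noteq> [] \<Longrightarrow> build i q (p0 @ [w]) = build i q p0 @ [(i, last q) # w]"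
  by (cases p0) (simp_all add: build_def)

lemma set_build: "set (build i q p) = set (map (emb i) q) \<union> Cons (i, last q) ` set (tl p)"
  by (simp add: build_def)

lemma len_emb_set: "x \<in> set (map (emb i) q) \<Longrightarrow> length x \<le> 1"
  using emb_len by auto

lemma B2:
  assumes i: "i < r" and q: "q \<in> T i k" and k: "1 \<le> k" and jrn: "j < r" "j \<noteq> i"
  shows "p' \<in> ST j m \<Longrightarrow> build i q p' \<in> ST i (k + m)"
proof (induction m arbitrary: p')
  case 0 then show ?case using ST_D[OF "0.prems"] by simp
next
  case (Suc m)
  define a where "a = last q"
  have aV: "a \<in> V i" and ar: "a \<noteq> rt i" using lastq[OF i q k] a_def by auto
  define M where "M = map (emb i) q"
  have MST: "M \<in> ST i k" using B1[OF i q k] M_def by simp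
  have lq: "length q = Suc k" using T_D(1)[OF q] .
  have lM: "length M = Suc k" using lq M_def by simp
  have qne: "q \<noteq> []" using lq by auto
  have lastM: "last M = [(i, a)]" using last_map_emb[OF qne, of i] ar a_def M_def by simp
  have aFV: "[(i, a)] \<in> FV" using emb_FV[OF i aV] ar by (simp add: emb_nonroot)
  have p'SW: "p' \<in> SW (Suc m)" and tp': "fst (hd (p' ! 1)) = j" using ST_D[OF Suc.prems] by auto
  obtain p0 w where pe: "p' = p0 @ [w]" and p0: "p0 \<in> SW m" and fa: "FA (last p0) w"
    and nw: "w \<notin> set p0" and wFV: "w \<in> FV" using p'SW SW_Suc by blast
  have lp0: "length p0 = Suc m" using SW_D(1)[OF p0] .
  have nil_p0: "[] \<in> set p0" using SW_D(2)[OF p0] lp0 by (metis hd_in_set list.size(3) nat.distinct(1))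
  have wne: "w \<noteq> []" using nil_p0 nw by auto
  have wtl: "w \<in> set (tl p')" using pe lp0 by (cases p0) auto
  have tw: "fst (hd w) = j" using SW_tl[OF p'SW wtl] tp' by simp
  show ?case
  proof (cases "m = 0")
    case True
    then have p0e: "p0 = [[]]" using p0 SW_0 by simp
    then have "FA [] w" using fa by simp
    then obtain j' y where y: "j' < r" "y \<in> V j'" "y \<noteq> rt j'" "E j' (rt j') y" "w = [(j', y)]"
      using N0 by blast
    then have jj: "j' = j" using tw by simp
    have be: "build i q p' = M @ [[(i, a), (j, y)]]" using pe p0e y jj by (simp add: build_def M_def a_def)
    have fa2: "FA (last M) [(i, a), (j, y)]" unfolding lastM fp_adj_def
      apply (rule exI[of _ "[(i, a)]"], rule exI[of _ j], rule exI[of _ "rt j"], rule exI[of _ y])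
      using y jj jrn aFV root[OF jrn(1)] by (simp add: emb_nonroot)
    have nin: "[(i, a), (j, y)] \<notin> set M"
    proof
      assume "[(i, a), (j, y)] \<in> set M"
      then have "length [(i, a), (j, y)] \<le> 1" using len_emb_set unfolding M_def by blast
      then show False by simp
    qed
    have "[(i, a), (j, y)] \<in> FV" using FV_Cons[of "[(j, y)]" "(i, a)"] wFV y jj jrn aV ar i by simp
    then have "build i q p' \<in> SW (Suc k)" unfolding be SW_Suc using ST_D[OF MST] fa2 nin by blast
    moreover have "build i q p' ! 1 = M ! 1" unfolding be using lM k by (simp add: nth_append)
    ultimately show ?thesis using ST_D[OF MST] True by (intro ST_I) auto
  next
    case False
    have "(p0 @ [w]) ! 1 = p0 ! 1" using lp0 False by (simp add: nth_append)
    then have p0ST: "p0 \<in> ST j m" using p0 False tp' pe by (intro ST_I) auto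
    have IH: "build i q p0 \<in> ST i (k + m)" using Suc.IH[OF p0ST] .
    have "p0 \<noteq> []" using lp0 by auto
    then have be: "build i q p' = build i q p0 @ [(i, a) # w]" using pe build_snoc a_def by simp
    have tlne: "tl p0 \<noteq> []" using lp0 False by (cases p0) auto
    have lastb: "last (build i q p0) = (i, a) # last p0"
      using tlne by (simp add: build_def a_def last_map last_tl)
    have ltl: "last p0 \<in> set (tl p0)" using tlne by (metis last_in_set last_tl)
    have lp0ne: "last p0 \<noteq> []" and tl0: "fst (hd (last p0)) = fst (hd (p0 ! 1))"
      using SW_tl[OF p0 ltl] by auto
    have "fst (hd (last p0)) = j" using tl0 ST_D[OF p0ST] by simp
    then have fa2: "FA (last (build i q p0)) ((i, a) # w)" unfolding lastb
      using Pref[OF fa lp0ne wne] jrn aV ar i by simp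
    have nin: "(i, a) # w \<notin> set (build i q p0)"
    proof
      assume "(i, a) # w \<in> set (build i q p0)"
      then consider "(i, a) # w \<in> set (map (emb i) q)" | "(i, a) # w \<in> Cons (i, last q) ` set (tl p0)"
        unfolding set_build by blast
      then show False
      proof cases
        case 1 then have "length ((i, a) # w) \<le> 1" using len_emb_set by blast
        then show False using wne by simp
      next
        case 2 then have "w \<in> set (tl p0)" by auto
        then show False using nw by (metis list.sel(2) list.set_sel(2))
      qed
    qed
    have "(i, a) # w \<in> FV" using FV_Cons[of w "(i, a)"] wFV tw jrn aV ar i by simp
    then have "build i q p' \<in> SW (Suc (k + m))" unfolding be SW_Suc using ST_D[OF IH] fa2 nin by blast
    moreover have "length (build i q p0) = Suc (k + m)" using SW_D(1) ST_D[OF IH] by simp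
    then have "build i q p' ! 1 = build i q p0 ! 1" unfolding be using k by (simp add: nth_append)
    ultimately show ?thesis using ST_D[OF IH] by (intro ST_I) auto
  qed
qed

end



context fp begin

lemma PP_0: "PP i 0 = {[[]]}" by (simp add: PP_def)
lemma PP_Suc: "p \<in> PP i (Suc m) \<longleftrightarrow> (\<exists>j. j < r \<and> j \<noteq> i \<and> p \<in> ST j (Suc m))"
  by (auto simp: PP_def)

lemma F:
  assumes i: "i < r"
  shows "p \<in> ST i n \<Longrightarrow> \<exists>k q p'. 1 \<le> k \<and> k \<le> n \<and> q \<in> T i k \<and> p' \<in> PP i (n - k) \<and> p = build i q p'"
proof (induction n arbitrary: p)
  case 0 then show ?case using ST_D[OF "0.prems"] by simp
next
  case (Suc n)
  have pSW: "p \<in> SW (Suc n)" and tp: "fst (hd (p ! 1)) = i" using ST_D[OF Suc.prems] by auto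
  obtain p0 w where pe: "p = p0 @ [w]" and p0: "p0 \<in> SW n" and fa: "FA (last p0) w"
    and nw: "w \<notin> set p0" and wFV: "w \<in> FV" using pSW SW_Suc by blast
  have lp0: "length p0 = Suc n" using SW_D(1)[OF p0] .
  show ?case
  proof (cases "n = 0")
    case True
    then have p0e: "p0 = [[]]" using p0 SW_0 by simp
    then have "FA [] w" using fa by simp
    then obtain j y where y: "j < r" "y \<in> V j" "y \<noteq> rt j" "E j (rt j) y" "w = [(j, y)]"
      using N0 by blast
    have pe2: "p = [[], [(j, y)]]" using pe p0e y by simp
    then have jj: "j = i" using tp by simp
    have "[rt i, y] \<in> T i (Suc 0)" unfolding T_Suc
      apply (rule exI[of _ "[rt i]"], rule exI[of _ y])
      using T_0[OF i] y jj by simp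
    moreover have "p = build i [rt i, y] [[]]" using pe2 jj y by (simp add: build_Nil emb_nonroot)
    ultimately show ?thesis using True PP_0 by (intro exI[of _ 1] exI[of _ "[rt i, y]"] exI[of _ "[[]]"]) auto
  next
    case False
    have "(p0 @ [w]) ! 1 = p0 ! 1" using lp0 False by (simp add: nth_append)
    then have p0ST: "p0 \<in> ST i n" using p0 False tp pe by (intro ST_I) auto
    obtain k q p' where k: "1 \<le> k" "k \<le> n" and q: "q \<in> T i k" and p': "p' \<in> PP i (n - k)"
      and p0e: "p0 = build i q p'" using Suc.IH[OF p0ST] by blast
    define a where "a = last q"
    have aV: "a \<in> V i" and ar: "a \<noteq> rt i" using lastq[OF i q k(1)] a_def by auto
    have lq: "length q = Suc k" using T_D(1)[OF q] .
    have qne: "q \<noteq> []" using lq by auto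
    have aFV: "[(i, a)] \<in> FV" using emb_FV[OF i aV] ar by (simp add: emb_nonroot)
    show ?thesis
    proof (cases "k = n")
      case True
      then have p'e: "p' = [[]]" using p' PP_0 by simp
      then have p0m: "p0 = map (emb i) q" using p0e build_Nil by simp
      have lastp0: "last p0 = [(i, a)]" using last_map_emb[OF qne, of i] ar a_def p0m by simp
      have "FA [(i, a)] w" using fa lastp0 by simp
      then consider (sib) b where "b \<in> V i" "E i a b" "w = emb i b"
        | (child) j y where "j < r" "j \<noteq> i" "y \<in> V j" "y \<noteq> rt j" "E j (rt j) y" "w = [(i, a), (j, y)]"
        using N1 by blast
      then show ?thesis
      proof cases
        case sib
        have "b \<notin> set q"
        proof
          assume "b \<in> set q"
          then have "w \<in> set p0" using p0m sib by simp
          then show False using nw by simp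
        qed
        then have "q @ [b] \<in> T i (Suc k)" unfolding T_Suc using q sib a_def by blast
        moreover have "p = build i (q @ [b]) [[]]" using pe p0m sib by (simp add: build_Nil)
        ultimately show ?thesis using True PP_0 k
          by (intro exI[of _ "Suc k"] exI[of _ "q @ [b]"] exI[of _ "[[]]"]) auto
      next
        case child
        have "FA [] [(j, y)]" using adj_emb[OF child(1) child(5)] child(4) by (simp add: emb_nonroot)
        moreover have "[(j, y)] \<in> FV" using emb_FV[OF child(1) child(3)] child(4) by (simp add: emb_nonroot)
        ultimately have "[[], [(j, y)]] \<in> SW (Suc 0)" unfolding SW_Suc
          by (intro exI[of _ "[[]]"] exI[of _ "[(j, y)]"]) (simp add: SW_0)
        then have "[[], [(j, y)]] \<in> ST j (Suc 0)" by (intro ST_I) auto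
        then have "[[], [(j, y)]] \<in> PP i (Suc n - k)" using True child PP_Suc by auto
        moreover have "p = build i q [[], [(j, y)]]" using pe p0m child a_def by (simp add: build_def)
        ultimately show ?thesis using q k
          by (intro exI[of _ k] exI[of _ q] exI[of _ "[[], [(j, y)]]"]) auto
      qed
    next
      case False
      then have "1 \<le> n - k" using k by simp
      then obtain m where m: "n - k = Suc m" by (cases "n - k") auto
      then have "p' \<in> PP i (Suc m)" using p' by simp
      then obtain j where j: "j < r" "j \<noteq> i" and p'ST: "p' \<in> ST j (Suc m)" unfolding PP_Suc by blast
      have p'SW: "p' \<in> SW (Suc m)" and tp': "fst (hd (p' ! 1)) = j" using ST_D[OF p'ST] by auto
      have lp': "length p' = Suc (Suc m)" using SW_D(1)[OF p'SW] .
      have "length (tl p') = Suc m" using lp' by simp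
      then have tlne: "tl p' \<noteq> []" by (metis list.size(3) nat.distinct(1))
      have "last p0 = last (map (Cons (i, a)) (tl p'))" using p0e tlne by (simp add: build_def a_def)
      also have "\<dots> = (i, a) # last (tl p')" using tlne by (simp add: last_map)
      also have "last (tl p') = last p'" using tlne by (simp add: last_tl)
      finally have lastp0: "last p0 = (i, a) # last p'" .
      have ltl: "last p' \<in> set (tl p')" using tlne by (metis last_in_set last_tl)
      have lp'ne: "last p' \<noteq> []" using SW_tl[OF p'SW ltl] by auto
      have "FA ((i, a) # last p') w" using fa lastp0 by simp
      then obtain w1 where we: "w = (i, a) # w1" and fa1: "FA (last p') w1"
        using N2[OF _ lp'ne] by blast
      have w1ne: "w1 \<noteq> []"
      proof
        assume "w1 = []"
        then have "w = last (map (emb i) q)" using we last_map_emb[OF qne, of i] ar a_def by simp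
        moreover have "last (map (emb i) q) \<in> set (map (emb i) q)" using qne by (intro last_in_set) simp
        ultimately have "w \<in> set p0" using p0e by (simp add: build_def)
        then show False using nw by simp
      qed
      have "w1 \<notin> set (tl p')"
      proof
        assume "w1 \<in> set (tl p')"
        then have "w \<in> set p0" using p0e we a_def by (simp add: build_def)
        then show False using nw by simp
      qed
      moreover have "hd p' = []" using SW_D(2)[OF p'SW] .
      moreover have "p' = [] # tl p'" using lp' \<open>hd p' = []\<close> by (metis list.collapse list.size(3) nat.distinct(1))
      ultimately have w1n: "w1 \<notin> set p'" using w1ne by (metis set_ConsD)

      have w1FV: "w1 \<in> FV" using wFV we FV_tail by blast
      have "p' @ [w1] \<in> SW (Suc (Suc m))"
        by (rule SW_Suc[THEN iffD2], rule exI[of _ p'], rule exI[of _ w1]) (simp add: p'SW fa1 w1n w1FV)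
      moreover have "(p' @ [w1]) ! 1 = p' ! 1" using lp' by (simp add: nth_append)
      ultimately have "p' @ [w1] \<in> ST j (Suc (Suc m))" using tp' by (intro ST_I) auto
      moreover have "Suc n - k = Suc (Suc m)" using m k by simp
      ultimately have "p' @ [w1] \<in> PP i (Suc n - k)" using PP_Suc j by metis
      have "p' \<noteq> []" using lp' by auto
      then have "build i q (p' @ [w1]) = build i q p' @ [(i, last q) # w1]" by (rule build_snoc)
      then have "p = build i q (p' @ [w1])" using pe p0e we a_def by simp
      with \<open>p' @ [w1] \<in> PP i (Suc n - k)\<close> show ?thesis using q k by (intro exI[of _ k] exI[of _ q] exI[of _ "p' @ [w1]"]) auto
    qed
  qed
qed

end



context fp begin

lemma build_filter1:
  assumes "\<forall>w\<in>set (tl p). w \<noteq> []"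
  shows "filter (\<lambda>x. length x \<le> 1) (build i q p) = map (emb i) q"
proof -
  have "filter (\<lambda>x. length x \<le> 1) (map (emb i) q) = map (emb i) q"
    using emb_len by (intro filter_True) auto
  moreover have "filter (\<lambda>x. length x \<le> 1) (map (Cons (i, last q)) (tl p)) = []"
    using assms by (intro filter_False) auto
  ultimately show ?thesis by (simp add: build_def)
qed

lemma build_filter2:
  assumes "\<forall>w\<in>set (tl p). w \<noteq> []"
  shows "filter (\<lambda>x. \<not> length x \<le> 1) (build i q p) = map (Cons (i, last q)) (tl p)"
proof -
  have "filter (\<lambda>x. \<not> length x \<le> 1) (map (emb i) q) = []"
    using emb_len by (intro filter_False) auto
  moreover have "filter (\<lambda>x. \<not> length x \<le> 1) (map (Cons (i, last q)) (tl p)) = map (Cons (i, last q)) (tl p)"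
    using assms by (intro filter_True) auto
  ultimately show ?thesis by (simp add: build_def)
qed

definition goodp where "goodp p \<longleftrightarrow> p \<noteq> [] \<and> hd p = [] \<and> (\<forall>w\<in>set (tl p). w \<noteq> [])"

lemma build_inj:
  assumes "goodp p1" "goodp p2" "build i q1 p1 = build i q2 p2"
  shows "q1 = q2 \<and> p1 = p2"
proof -
  have g1: "\<forall>w\<in>set (tl p1). w \<noteq> []" and g2: "\<forall>w\<in>set (tl p2). w \<noteq> []" using assms(1,2) goodp_def by auto
  have "map (emb i) q1 = map (emb i) q2" using build_filter1[OF g1, of i q1] build_filter1[OF g2, of i q2] assms(3) by simp
  moreover have "inj (emb i)" using emb_inj by (intro injI) auto
  ultimately have qq: "q1 = q2" by (simp add: inj_map_eq_map)
  have "map (Cons (i, last q1)) (tl p1) = map (Cons (i, last q1)) (tl p2)"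
    using build_filter2[OF g1, of i q1] build_filter2[OF g2, of i q2] assms(3) qq by simp
  then have "tl p1 = tl p2" by (simp add: inj_map_eq_map)
  moreover have "p1 \<noteq> []" "p2 \<noteq> []" using assms(1,2) by (auto simp: goodp_def)
  then have "p1 = hd p1 # tl p1" "p2 = hd p2 # tl p2" by simp_all
  ultimately show ?thesis using qq assms(1,2) goodp_def by metis
qed

lemma PP_good: "p \<in> PP i m \<Longrightarrow> goodp p"
proof (cases m)
  case 0
  assume "p \<in> PP i m" then show ?thesis using 0 by (simp add: PP_0 goodp_def)
next
  case (Suc m')
  assume "p \<in> PP i m"
  then obtain j where "p \<in> ST j (Suc m')" using Suc PP_Suc by blast
  then have p: "p \<in> SW (Suc m')" using ST_D by blast
  have "p \<noteq> []" using SW_D(1)[OF p] by auto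
  then show ?thesis using SW_D(2)[OF p] SW_tl[OF p] by (simp add: goodp_def)
qed

definition XX where "XX i n = (\<Union>k\<in>{1..n}. T i k \<times> PP i (n - k))"

lemma ST_eq:
  assumes i: "i < r" and n: "1 \<le> n"
  shows "ST i n = (\<lambda>(q, p'). build i q p') ` XX i n"
proof
  show "ST i n \<subseteq> (\<lambda>(q, p'). build i q p') ` XX i n"
  proof
    fix p assume "p \<in> ST i n"
    then obtain k q p' where "1 \<le> k" "k \<le> n" "q \<in> T i k" "p' \<in> PP i (n - k)" "p = build i q p'"
      using F[OF i] by blast
    then show "p \<in> (\<lambda>(q, p'). build i q p') ` XX i n" unfolding XX_def by force
  qed
next
  show "(\<lambda>(q, p'). build i q p') ` XX i n \<subseteq> ST i n"
  proof
    fix p assume "p \<in> (\<lambda>(q, p'). build i q p') ` XX i n"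
    then obtain k q p' where k: "1 \<le> k" "k \<le> n" and q: "q \<in> T i k" and p': "p' \<in> PP i (n - k)"
      and pe: "p = build i q p'" unfolding XX_def by auto
    show "p \<in> ST i n"
    proof (cases "k = n")
      case True
      then have "p' = [[]]" using p' PP_0 by simp
      then show ?thesis using B1[OF i q k(1)] pe True by (simp add: build_Nil)
    next
      case False
      then obtain m where m: "n - k = Suc m" using k by (cases "n - k") auto
      then obtain j where j: "j < r" "j \<noteq> i" "p' \<in> ST j (Suc m)" using p' PP_Suc by metis
      have "build i q p' \<in> ST i (k + Suc m)" using B2[OF i q k(1) j(1,2) j(3)] .
      moreover have "k + Suc m = n" using m k by simp
      ultimately show ?thesis using pe by simp
    qed
  qed
qed

lemma finite_ST: "finite (ST j n)"
  using finite_SW by (rule rev_finite_subset) (auto simp: ST_def)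

lemma finite_PP: "finite (PP i m)"
  by (cases m) (auto simp: PP_def finite_ST)

lemma card_XX:
  assumes i: "i < r"
  shows "card (XX i n) = (\<Sum>k\<in>{1..n}. sc i k * card (PP i (n - k)))"
proof -
  have "card (XX i n) = (\<Sum>k\<in>{1..n}. card (T i k \<times> PP i (n - k)))"
    unfolding XX_def
  proof (rule card_UN_disjoint)
    show "finite {1..n}" by simp
    show "\<forall>k\<in>{1..n}. finite (T i k \<times> PP i (n - k))" using finite_T[OF i] finite_PP by auto
    show "\<forall>k\<in>{1..n}. \<forall>k'\<in>{1..n}. k \<noteq> k' \<longrightarrow> (T i k \<times> PP i (n - k)) \<inter> (T i k' \<times> PP i (n - k')) = {}"
    proof (intro ballI impI)
      fix k k' :: nat assume "k \<noteq> k'"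
      show "(T i k \<times> PP i (n - k)) \<inter> (T i k' \<times> PP i (n - k')) = {}"
      proof (rule ccontr)
        assume "(T i k \<times> PP i (n - k)) \<inter> (T i k' \<times> PP i (n - k')) \<noteq> {}"
        then obtain q p where "q \<in> T i k" "q \<in> T i k'" by blast
        then have "Suc k = Suc k'" using T_D(1) by metis
        then show False using \<open>k \<noteq> k'\<close> by simp
      qed
    qed
  qed
  then show ?thesis by (simp add: card_cartesian_product sc_def)
qed

lemma card_PP_Suc:
  "card (PP i (Suc m)) = (\<Sum>j\<in>{..<r}-{i}. A j (Suc m))"
  unfolding PP_def A_def
proof (simp, rule card_UN_disjoint)
  show "finite ({..<r} - {i})" by simp
  show "\<forall>j\<in>{..<r} - {i}. finite (ST j (Suc m))" using finite_ST by blast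
  show "\<forall>j\<in>{..<r} - {i}. \<forall>j'\<in>{..<r} - {i}. j \<noteq> j' \<longrightarrow> ST j (Suc m) \<inter> ST j' (Suc m) = {}"
    by (auto simp: ST_def)
qed

definition cc where "cc i m = (if m = 0 then 1 else (\<Sum>j\<in>{..<r}-{i}. A j m))"

lemma card_PP: "card (PP i m) = cc i m"
  by (cases m) (simp_all add: cc_def PP_0 card_PP_Suc)

theorem A_rec:
  assumes i: "i < r" and n: "1 \<le> n"
  shows "A i n = (\<Sum>k\<in>{1..n}. sc i k * cc i (n - k))"
proof -
  have "inj_on (\<lambda>(q, p'). build i q p') (XX i n)"
  proof (rule inj_onI, clarify)
    fix q1 p1 q2 p2 assume a: "(q1, p1) \<in> XX i n" "(q2, p2) \<in> XX i n" "build i q1 p1 = build i q2 p2"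
    have "goodp p1" "goodp p2" using a(1,2) PP_good unfolding XX_def by auto
    then show "q1 = q2 \<and> p1 = p2" using build_inj a(3) by blast
  qed
  then have "A i n = card (XX i n)" unfolding A_def ST_eq[OF i n] by (rule card_image)
  then show ?thesis using card_XX[OF i] card_PP by simp
qed

lemma A_0: "A i 0 = 0"
  by (simp add: A_def ST_def)

theorem saw_sum:
  assumes n: "1 \<le> n"
  shows "fp_saw V E rt r n = (\<Sum>j<r. A j n)"
proof -
  have "SW n = (\<Union>j<r. ST j n)"
  proof
    show "SW n \<subseteq> (\<Union>j<r. ST j n)"
    proof
      fix p assume p: "p \<in> SW n"
      obtain j y where "j < r" "p ! 1 = [(j, y)]" using SW_first[OF p n] by blast
      then have "p \<in> ST j n" using p n by (intro ST_I) auto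
      then show "p \<in> (\<Union>j<r. ST j n)" using \<open>j < r\<close> by blast
    qed
    show "(\<Union>j<r. ST j n) \<subseteq> SW n" by (auto simp: ST_def)
  qed
  moreover have "card (\<Union>j<r. ST j n) = (\<Sum>j<r. card (ST j n))"
  proof (rule card_UN_disjoint)
    show "finite {..<r}" by simp
    show "\<forall>j\<in>{..<r}. finite (ST j n)" using finite_ST by blast
    show "\<forall>j\<in>{..<r}. \<forall>j'\<in>{..<r}. j \<noteq> j' \<longrightarrow> ST j n \<inter> ST j' n = {}"
      by (auto simp: ST_def)
  qed
  ultimately show ?thesis by (simp add: fp_saw_def saw_count_walkset SW_def[symmetric] A_def)
qed

end



context fp begin

definition NN where "NN = (\<Sum>i<r. card (V i))"
definition M where "M i z = (\<Sum>k\<in>{1..NN}. real (sc i k) * z ^ k)"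

lemma NN_ge: "i < r \<Longrightarrow> card (V i) \<le> NN"
  unfolding NN_def by (rule member_le_sum) auto

lemma NN_pos: "2 \<le> NN"
  using NN_ge[of 0] card2[of 0] r2 by simp

lemma sc_big: "i < r \<Longrightarrow> NN < k \<Longrightarrow> sc i k = 0"
  using NN_ge sc_zero by (meson le_trans less_imp_le)

lemma psum_eq_inter:
  assumes i: "i < r"
  shows "(\<Sum>k\<in>{1..n}. real (sc i k) * z ^ k) = (\<Sum>k\<in>{1..n} \<inter> {1..NN}. real (sc i k) * z ^ k)"
  by (rule sum.mono_neutral_right) (auto simp: sc_big[OF i])

lemma psum_le:
  assumes i: "i < r" and z: "0 \<le> z"
  shows "(\<Sum>k\<in>{1..n}. real (sc i k) * z ^ k) \<le> M i z"
  unfolding psum_eq_inter[OF i] M_def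
  by (rule sum_mono2) (auto simp: z)

lemma psum_eq:
  assumes i: "i < r" and n: "NN \<le> n"
  shows "(\<Sum>k\<in>{1..n}. real (sc i k) * z ^ k) = M i z"
proof -
  have e: "{1..n} \<inter> {1..NN} = {1..NN}" using n by auto
  show ?thesis by (simp only: psum_eq_inter[OF i] M_def e)
qed

lemma Mgf_eq:
  assumes i: "i < r"
  shows "Mgf V E rt i z = M i z"
proof -
  have sc: "saw_count (V i) (E i) (rt i) m = sc i m" for m by (simp add: saw_count_walkset sc_def T_def)
  have "Mgf V E rt i z = (\<Sum>n\<in>{..<NN}. real (sc i (Suc n)) * z ^ Suc n)"
    unfolding Mgf_def sc
    by (rule suminf_finite) (auto simp: sc_big[OF i])
  also have "\<dots> = M i z" unfolding M_def by (simp add: sum.atLeast1_atMost_eq)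
  finally show ?thesis .
qed

lemma M_nonneg: "0 \<le> z \<Longrightarrow> 0 \<le> M i z"
  unfolding M_def by (intro sum_nonneg) auto

lemma M_0: "M i 0 = 0"
  unfolding M_def by simp

lemma M_strict_mono:
  assumes i: "i < r" and z: "0 \<le> z" "z < w"
  shows "M i z < M i w"
  unfolding M_def
proof (rule sum_strict_mono_ex1)
  show "finite {1..NN}" by simp
  show "\<forall>k\<in>{1..NN}. real (sc i k) * z ^ k \<le> real (sc i k) * w ^ k"
    using z by (auto intro!: mult_left_mono power_mono)
  have "1 \<in> {1..NN}" using NN_pos by simp
  moreover have "real (sc i 1) * z ^ 1 < real (sc i 1) * w ^ 1" using sc1[OF i] z by simp
  ultimately show "\<exists>k\<in>{1..NN}. real (sc i k) * z ^ k < real (sc i k) * w ^ k" by blast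
qed

lemma M_pos: "i < r \<Longrightarrow> 0 < z \<Longrightarrow> 0 < M i z"
  using M_strict_mono[of i 0 z] M_0 by simp

lemma M_1: "i < r \<Longrightarrow> 1 \<le> M i 1"
proof -
  assume i: "i < r"
  have "1 \<in> {1..NN}" using NN_pos by simp
  then have "real (sc i 1) * 1 ^ 1 \<le> M i 1" unfolding M_def by (intro member_le_sum) auto
  then show ?thesis using sc1[OF i] by simp
qed

lemma M_cont: "continuous_on S (M i)"
  unfolding M_def by (intro continuous_intros)

definition FF where "FF z = (\<Sum>i<r. M i z / (1 + M i z))"

lemma frac_mono: "0 \<le> (s::real) \<Longrightarrow> s < t \<Longrightarrow> s / (1 + s) < t / (1 + t)"
  by (simp add: divide_simps algebra_simps)

lemma FF_strict_mono:
  assumes "0 \<le> z" "z < w"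
  shows "FF z < FF w"
  unfolding FF_def
proof (rule sum_strict_mono)
  show "finite {..<r}" by simp
  have "0 \<in> {..<r}" using r2 by simp
  then show "{..<r} \<noteq> {}" by blast
  fix i assume "i \<in> {..<r}"
  then have i: "i < r" by simp
  show "M i z / (1 + M i z) < M i w / (1 + M i w)"
    using frac_mono M_nonneg M_strict_mono[OF i assms] assms by simp
qed

lemma FF_0: "FF 0 = 0"
  by (simp add: FF_def M_0)

lemma FF_1: "1 \<le> FF 1"
proof -
  have "\<forall>i\<in>{..<r}. 1/2 \<le> M i 1 / (1 + M i 1)"
  proof
    fix i assume "i \<in> {..<r}"
    then have "1 \<le> M i 1" using M_1 by simp
    then show "1/2 \<le> M i 1 / (1 + M i 1)" by (simp add: divide_simps)
  qed
  then have "(\<Sum>i<r. (1/2::real)) \<le> FF 1" unfolding FF_def by (intro sum_mono) auto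
  then show ?thesis using r2 by simp
qed

lemma one_plus_M_nz: "0 \<le> x \<Longrightarrow> 1 + M i x \<noteq> 0"
  using M_nonneg[of x i] by auto

lemma FF_cont: "continuous_on {0..1} FF"
  unfolding FF_def
  by (intro continuous_intros M_cont) (use one_plus_M_nz in auto)

definition z0 where "z0 = (SOME z. 0 < z \<and> z \<le> 1 \<and> FF z = 1)"

lemma z0_prop: "0 < z0 \<and> z0 \<le> 1 \<and> FF z0 = 1"
proof -
  obtain z where z: "0 \<le> z" "z \<le> 1" "FF z = 1"
    using IVT'[of FF 0 1 1] FF_0 FF_1 FF_cont by auto
  then have "z \<noteq> 0" using FF_0 by auto
  then have "\<exists>z. 0 < z \<and> z \<le> 1 \<and> FF z = 1" using z by (intro exI[of _ z]) auto
  then show ?thesis unfolding z0_def by (rule someI_ex)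
qed

lemma FF_lt1: "0 \<le> z \<Longrightarrow> z < z0 \<Longrightarrow> FF z < 1"
  using FF_strict_mono z0_prop by fastforce

lemma Dfun_eq:
  assumes z: "0 \<le> z"
  shows "Dfun V E rt r z = (\<Prod>k<r. 1 + M k z) * (1 - FF z)"
proof -
  have p: "(\<Prod>k<r. 1 + Mgf V E rt k z) = (\<Prod>k<r. 1 + M k z)" by (rule prod.cong) (simp_all add: Mgf_eq)
  have s: "(\<Sum>i<r. Mgf V E rt i z * (\<Prod>j\<in>{..<r} - {i}. 1 + Mgf V E rt j z))
        = (\<Sum>i<r. M i z * (\<Prod>j\<in>{..<r} - {i}. 1 + M j z))"
    by (rule sum.cong) (simp_all add: Mgf_eq)
  have "\<And>i. i < r \<Longrightarrow> M i z * (\<Prod>j\<in>{..<r} - {i}. 1 + M j z) = M i z / (1 + M i z) * (\<Prod>k<r. 1 + M k z)"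
  proof -
    fix i assume i: "i < r"
    have "(\<Prod>k<r. 1 + M k z) = (1 + M i z) * (\<Prod>j\<in>{..<r} - {i}. 1 + M j z)"
      using i by (simp add: prod.remove)
    moreover have "1 + M i z \<noteq> 0" using M_nonneg[OF z, of i] by simp
    ultimately show "M i z * (\<Prod>j\<in>{..<r} - {i}. 1 + M j z) = M i z / (1 + M i z) * (\<Prod>k<r. 1 + M k z)"
      by simp
  qed
  then have "(\<Sum>i<r. M i z * (\<Prod>j\<in>{..<r} - {i}. 1 + M j z)) = FF z * (\<Prod>k<r. 1 + M k z)"
    unfolding FF_def sum_distrib_right by (intro sum.cong) simp_all
  then show ?thesis unfolding Dfun_def p s by (simp add: algebra_simps)
qed

lemma prodM_pos: "0 \<le> z \<Longrightarrow> 0 < (\<Prod>k<r. 1 + M k z)"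
  using M_nonneg by (intro prod_pos) (simp add: add_pos_nonneg)

lemma Dfun_z0: "Dfun V E rt r z0 = 0"
  using Dfun_eq[of z0] z0_prop by simp

lemma Dfun_nz: "0 < z \<Longrightarrow> z < z0 \<Longrightarrow> Dfun V E rt r z \<noteq> 0"
proof -
  assume z: "0 < z" "z < z0"
  have "0 < (\<Prod>k<r. 1 + M k z) * (1 - FF z)"
    using prodM_pos[of z] FF_lt1[of z] z by (intro mult_pos_pos) auto
  then show ?thesis using Dfun_eq[of z] z by (simp only:)
qed

end



context fp begin

lemma A_rec_real:
  assumes i: "i < r" and n: "1 \<le> n"
  shows "real (A i n) = (\<Sum>k\<in>{1..n}. real (sc i k) * real (cc i (n - k)))"
  using A_rec[OF i n] by simp

lemma cc_real: "real (cc i m) = (if m = 0 then 1 else (\<Sum>j\<in>{..<r}-{i}. real (A j m)))"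
  by (simp add: cc_def)

lemma pow_split: "0 < (z::real) \<Longrightarrow> k \<le> n \<Longrightarrow> (1/z) ^ (n - k) = z ^ k * (1/z) ^ n"
proof -
  assume z: "0 < z" and k: "k \<le> n"
  have "(1/z) ^ n = (1/z) ^ (n - k) * (1/z) ^ k" using k by (simp add: power_add[symmetric])
  then have "z ^ k * (1/z) ^ n = (1/z) ^ (n - k) * (z ^ k * (1/z) ^ k)" by (simp add: algebra_simps)
  also have "z ^ k * (1/z) ^ k = 1" using z by (simp add: power_mult_distrib[symmetric])
  finally show ?thesis by simp
qed

lemma upper:
  assumes z: "0 < z" "z < z0"
  shows "\<forall>i<r. real (A i n) \<le> M i z / (1 + M i z) / (1 - FF z) * (1/z) ^ n"
proof (induction n rule: less_induct)
  case (less n)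
  define u where "u i = M i z / (1 + M i z) / (1 - FF z)" for i
  have F1: "FF z < 1" using FF_lt1 z by simp
  have unn: "0 \<le> u i" for i unfolding u_def using F1 M_nonneg[of z i] z by simp
  show ?case
  proof (intro allI impI)
    fix i assume i: "i < r"
    show "real (A i n) \<le> M i z / (1 + M i z) / (1 - FF z) * (1/z) ^ n"
    proof (cases "n = 0")
      case True then show ?thesis using A_0 unn[of i] by (simp add: u_def)
    next
      case False
      then have n: "1 \<le> n" by simp
      define K where "K = 1 + (\<Sum>j\<in>{..<r}-{i}. u j)"
      have K1: "1 \<le> K" unfolding K_def using unn by (simp add: sum_nonneg)
      have ccle: "real (cc i (n - k)) \<le> K * (1/z) ^ (n - k)" if k: "k \<in> {1..n}" for k
      proof (cases "n - k = 0")
        case True then show ?thesis using K1 by (simp add: cc_real)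
      next
        case False
        have "real (cc i (n - k)) = (\<Sum>j\<in>{..<r}-{i}. real (A j (n - k)))" using False by (simp add: cc_real)
        also have "\<dots> \<le> (\<Sum>j\<in>{..<r}-{i}. u j * (1/z) ^ (n - k))"
        proof (rule sum_mono)
          fix j assume "j \<in> {..<r}-{i}"
          then have "j < r" by simp
          moreover have "n - k < n" using k False by auto
          ultimately have "real (A j (n - k)) \<le> M j z / (1 + M j z) / (1 - FF z) * (1/z) ^ (n - k)"
            using less.IH by blast
          then show "real (A j (n - k)) \<le> u j * (1/z) ^ (n - k)" by (simp add: u_def)
        qed
        also have "\<dots> = (K - 1) * (1/z) ^ (n - k)" unfolding K_def by (simp add: sum_distrib_right)
        also have "\<dots> \<le> K * (1/z) ^ (n - k)" using z by simp
        finally show ?thesis .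
      qed
      have "real (A i n) = (\<Sum>k\<in>{1..n}. real (sc i k) * real (cc i (n - k)))" using A_rec_real[OF i n] .
      also have "\<dots> \<le> (\<Sum>k\<in>{1..n}. real (sc i k) * (K * (1/z) ^ (n - k)))"
        using ccle by (intro sum_mono mult_left_mono) auto
      also have "\<dots> = (\<Sum>k\<in>{1..n}. real (sc i k) * z ^ k) * (K * (1/z) ^ n)"
        unfolding sum_distrib_right by (intro sum.cong) (auto simp: pow_split[OF z(1)])
      also have "\<dots> \<le> M i z * (K * (1/z) ^ n)"
        using psum_le[OF i, of z n] z K1 by (intro mult_right_mono) auto
      finally have le1: "real (A i n) \<le> M i z * (K * (1/z) ^ n)" .
      have MK: "M i z * K = u i"
      proof -
        have S: "(\<Sum>j<r. u j) = FF z / (1 - FF z)" unfolding u_def FF_def by (simp add: sum_divide_distrib)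
        have "(\<Sum>j\<in>{..<r}-{i}. u j) = (\<Sum>j<r. u j) - u i" using i by (simp add: sum_diff1)
        then have Ke: "K = 1 + FF z / (1 - FF z) - u i" unfolding K_def using S by simp
        have d1: "1 - FF z \<noteq> 0" using F1 by simp
        have d2: "1 + M i z \<noteq> 0" using M_nonneg[of z i] z by simp
        have e1: "1 + FF z / (1 - FF z) = 1 / (1 - FF z)" using d1 by (simp add: field_simps)
        have e2: "1 - M i z / (1 + M i z) = 1 / (1 + M i z)" using d2 by (simp add: field_simps)
        have "K = 1 / (1 - FF z) - M i z / (1 + M i z) / (1 - FF z)" unfolding Ke e1[symmetric] u_def by simp
        also have "\<dots> = (1 - M i z / (1 + M i z)) / (1 - FF z)" by (simp add: diff_divide_distrib)
        also have "\<dots> = 1 / (1 + M i z) / (1 - FF z)" unfolding e2 ..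
        finally show ?thesis unfolding u_def by simp
      qed
      have "M i z * (K * (1/z) ^ n) = u i * (1/z) ^ n" using MK by (simp add: mult.assoc[symmetric])
      then show ?thesis using le1 by (simp add: u_def)
    qed
  qed
qed

lemma A_ge1: "i < r \<Longrightarrow> 1 \<le> n \<Longrightarrow> 1 \<le> A i n"
proof (induction n arbitrary: i)
  case 0 then show ?case by simp
next
  case (Suc m)
  have i: "i < r" using Suc.prems by simp
  have "sc i 1 * cc i (Suc m - 1) \<le> (\<Sum>k\<in>{1..Suc m}. sc i k * cc i (Suc m - k))"
    by (rule member_le_sum) auto
  also have "\<dots> = A i (Suc m)" using A_rec[OF i] by simp
  finally have le: "sc i 1 * cc i m \<le> A i (Suc m)" by simp
  show ?case
  proof (cases "m = 0")
    case True then show ?thesis using le sc1[OF i] by (simp add: cc_def)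
  next
    case False
    define j where "j = (if i = 0 then 1 else (0::nat))"
    have j: "j \<in> {..<r} - {i}" using r2 by (auto simp: j_def)
    have "A j m \<le> (\<Sum>j\<in>{..<r}-{i}. A j m)" using j by (intro member_le_sum) auto
    moreover have "1 \<le> A j m" using Suc.IH[of j] j False by simp
    ultimately have "1 \<le> cc i m" using False by (simp add: cc_def)
    then have one: "1 \<le> sc i 1 * cc i m" using sc1[OF i] by (metis mult_le_mono nat_mult_1)
    show ?thesis using order_trans[OF one le] .
  qed
qed

lemma lower:
  "\<forall>i<r. 1 \<le> n \<longrightarrow> z0 ^ NN * (M i z0 / (1 + M i z0)) * (1/z0) ^ n \<le> real (A i n)"
proof (induction n rule: less_induct)
  case (less n)
  define v where "v i = M i z0 / (1 + M i z0)" for i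
  define lam where "lam = z0 ^ NN"
  have z0: "0 < z0" "z0 \<le> 1" "FF z0 = 1" using z0_prop by auto
  have vnn: "0 \<le> v i" "v i \<le> 1" for i unfolding v_def using M_nonneg[of z0 i] z0 by (auto simp: divide_simps)
  show ?case
  proof (intro allI impI)
    fix i assume i: "i < r" and n: "1 \<le> n"
    show "z0 ^ NN * (M i z0 / (1 + M i z0)) * (1/z0) ^ n \<le> real (A i n)"
    proof (cases "n \<le> NN")
      case True
      have "z0 ^ NN * (1/z0) ^ n = z0 ^ (NN - n)"
        using pow_split[of "1/z0" n NN] True z0 by simp
      also have "\<dots> \<le> 1" using z0 by (simp add: power_le_one)
      finally have X: "z0 ^ NN * (1/z0) ^ n \<le> 1" .
      have "z0 ^ NN * v i * (1/z0) ^ n = v i * (z0 ^ NN * (1/z0) ^ n)" by (simp add: algebra_simps)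
      also have "\<dots> \<le> 1 * (z0 ^ NN * (1/z0) ^ n)"
        using vnn[of i] z0 by (intro mult_right_mono) auto
      also have "\<dots> \<le> 1" using X by simp
      finally have "z0 ^ NN * v i * (1/z0) ^ n \<le> 1" .
      also have "1 \<le> real (A i n)" using A_ge1[OF i n] by simp
      finally show ?thesis by (simp add: v_def)
    next
      case False
      have "(\<Sum>k\<in>{1..NN}. real (sc i k) * real (cc i (n - k))) \<le> (\<Sum>k\<in>{1..n}. real (sc i k) * real (cc i (n - k)))"
        using False by (intro sum_mono2) auto
      also have "\<dots> = real (A i n)" using A_rec_real[OF i n] by simp
      finally have s1: "(\<Sum>k\<in>{1..NN}. real (sc i k) * real (cc i (n - k))) \<le> real (A i n)" .
      have sv: "(\<Sum>j\<in>{..<r}-{i}. v j) = 1 - v i"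
      proof -
        have "(\<Sum>j<r. v j) = 1" using z0(3) unfolding FF_def v_def by simp
        then show ?thesis using i by (simp add: sum_diff1)
      qed
      have ccge: "lam * (1 - v i) * (z0 ^ k * (1/z0) ^ n) \<le> real (cc i (n - k))" if k: "k \<in> {1..NN}" for k
      proof -
        have nk: "n - k \<noteq> 0" "n - k < n" "1 \<le> n - k" using k False by auto
        have "(1/z0) ^ (n - k) = z0 ^ k * (1/z0) ^ n" using pow_split[OF z0(1), of k n] nk by simp
        then have "lam * (1 - v i) * (z0 ^ k * (1/z0) ^ n) = lam * (\<Sum>j\<in>{..<r}-{i}. v j) * (1/z0) ^ (n - k)"
          using sv by simp
        also have "\<dots> = (\<Sum>j\<in>{..<r}-{i}. lam * v j * (1/z0) ^ (n - k))"
          by (simp add: sum_distrib_left sum_distrib_right)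
        finally have "lam * (1 - v i) * (z0 ^ k * (1/z0) ^ n) = (\<Sum>j\<in>{..<r}-{i}. lam * v j * (1/z0) ^ (n - k))" .
        also have "\<dots> \<le> (\<Sum>j\<in>{..<r}-{i}. real (A j (n - k)))"
        proof (rule sum_mono)
          fix j assume "j \<in> {..<r}-{i}"
          then have "j < r" by simp
          then show "lam * v j * (1/z0) ^ (n - k) \<le> real (A j (n - k))"
            using less.IH[OF nk(2)] nk(3) unfolding lam_def v_def by blast
        qed
        also have "\<dots> = real (cc i (n - k))" using nk by (simp add: cc_real)
        finally show ?thesis .
      qed
      have "lam * v i * (1/z0) ^ n = lam * (1 - v i) * (1/z0) ^ n * M i z0"
      proof -
        have "(1 - v i) * M i z0 = v i" unfolding v_def using M_nonneg[of z0 i] z0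
          by (simp add: field_simps)
        then show ?thesis by (metis mult.commute mult.left_commute)
      qed
      also have "\<dots> = (\<Sum>k\<in>{1..NN}. real (sc i k) * (lam * (1 - v i) * (z0 ^ k * (1/z0) ^ n)))"
        unfolding M_def sum_distrib_left by (intro sum.cong) (auto simp: algebra_simps)
      also have "\<dots> \<le> (\<Sum>k\<in>{1..NN}. real (sc i k) * real (cc i (n - k)))"
        using ccge by (intro sum_mono mult_left_mono) auto
      also have "\<dots> \<le> real (A i n)" using s1 .
      finally show ?thesis unfolding lam_def v_def .
    qed
  qed
qed

end



definition ipoly :: "real poly \<Rightarrow> bool" where "ipoly p \<longleftrightarrow> (\<forall>n. coeff p n \<in> \<int>)"

lemma ipoly_add: "ipoly p \<Longrightarrow> ipoly q \<Longrightarrow> ipoly (p + q)"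
  by (simp add: ipoly_def)
lemma ipoly_diff: "ipoly p \<Longrightarrow> ipoly q \<Longrightarrow> ipoly (p - q)"
  by (simp add: ipoly_def)
lemma ipoly_1: "ipoly 1"
  by (simp add: ipoly_def coeff_1)
lemma ipoly_0: "ipoly 0"
  by (simp add: ipoly_def)
lemma ipoly_mult: "ipoly p \<Longrightarrow> ipoly q \<Longrightarrow> ipoly (p * q)"
  unfolding ipoly_def coeff_mult by (intro allI Ints_sum Ints_mult) auto
lemma ipoly_monom: "c \<in> \<int> \<Longrightarrow> ipoly (monom c n)"
  by (simp add: ipoly_def coeff_monom)
lemma ipoly_sum: "finite A \<Longrightarrow> (\<And>i. i \<in> A \<Longrightarrow> ipoly (f i)) \<Longrightarrow> ipoly (\<Sum>i\<in>A. f i)"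
  by (induction A rule: finite_induct) (simp_all add: ipoly_0 ipoly_add)
lemma ipoly_prod: "finite A \<Longrightarrow> (\<And>i. i \<in> A \<Longrightarrow> ipoly (f i)) \<Longrightarrow> ipoly (\<Prod>i\<in>A. f i)"
  by (induction A rule: finite_induct) (simp_all add: ipoly_1 ipoly_mult)

context fp begin

theorem limit: "(\<lambda>n. root n (real (fp_saw V E rt r n))) \<longlonglongrightarrow> 1 / z0"
proof (rule order_tendstoI)
  have z0: "0 < z0" "z0 \<le> 1" "FF z0 = 1" using z0_prop by auto
  have r0: "0 < r" using r2 by simp
  fix a assume a: "a < 1 / z0"
  define c where "c = z0 ^ NN * (M 0 z0 / (1 + M 0 z0))"
  have c: "0 < c" unfolding c_def using M_pos[OF r0 z0(1)] z0 by simp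
  have "(\<lambda>n. root n c * (1 / z0)) \<longlonglongrightarrow> 1 * (1 / z0)"
    by (intro tendsto_mult LIMSEQ_root_const c tendsto_const)
  then have ev: "eventually (\<lambda>n. a < root n c * (1 / z0)) sequentially"
    using a by (intro order_tendstoD(1)) auto
  have ev1: "eventually (\<lambda>n. 1 \<le> n) sequentially" by (rule eventually_ge_at_top)
  show "eventually (\<lambda>n. a < root n (real (fp_saw V E rt r n))) sequentially"
    using ev ev1
  proof (rule eventually_elim2)
    fix n :: nat assume an: "a < root n c * (1 / z0)" and n: "1 \<le> n"
    have "c * (1 / z0) ^ n \<le> real (A 0 n)" using lower[of n] r0 n unfolding c_def by blast
    also have "\<dots> \<le> (\<Sum>j<r. real (A j n))" using r0 by (intro member_le_sum) auto
    also have "\<dots> = real (fp_saw V E rt r n)" using saw_sum[OF n] by simp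
    finally have le: "c * (1 / z0) ^ n \<le> real (fp_saw V E rt r n)" .
    have "root n (c * (1 / z0) ^ n) = root n c * (1 / z0)"
      using n z0 by (simp add: real_root_mult real_root_power_cancel)
    moreover have "root n (c * (1 / z0) ^ n) \<le> root n (real (fp_saw V E rt r n))"
      using le n by simp
    ultimately show "a < root n (real (fp_saw V E rt r n))" using an by simp
  qed
next
  have z0: "0 < z0" "z0 \<le> 1" "FF z0 = 1" using z0_prop by auto
  have r0: "0 < r" using r2 by simp
  fix a assume a: "1 / z0 < a"
  have apos: "0 < a" using a z0 by (smt (verit) divide_pos_pos)
  have az: "1 / a < z0" using a z0 apos by (simp add: field_simps)
  define ia where "ia = 1 / a"
  have ia: "0 < ia" "ia < z0" using apos az unfolding ia_def by simp_all
  define z where "z = (z0 + ia) / 2"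
  have z1: "0 < z" using ia unfolding z_def by (simp add: field_simps)
  have z2: "z < z0" using ia unfolding z_def by (simp add: field_simps)
  have z3: "ia < z" using ia unfolding z_def by (simp add: field_simps)
  note z = z1 z2 z3[unfolded ia_def]
  have za: "1 / z < a" using z apos by (simp add: field_simps)
  define S where "S = (\<Sum>i<r. M i z / (1 + M i z) / (1 - FF z))"
  have F1: "FF z < 1" using FF_lt1 z by simp
  have S: "0 < S" unfolding S_def
  proof (rule sum_pos)
    show "finite {..<r}" by simp
    show "{..<r} \<noteq> {}" using r0 by auto
    fix i assume "i \<in> {..<r}"
    then show "0 < M i z / (1 + M i z) / (1 - FF z)" using M_pos[of i z] z F1
      by (simp add: add_pos_pos)
  qed
  have "(\<lambda>n. root n S * (1 / z)) \<longlonglongrightarrow> 1 * (1 / z)"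
    by (intro tendsto_mult LIMSEQ_root_const S tendsto_const)
  then have ev: "eventually (\<lambda>n. root n S * (1 / z) < a) sequentially"
    using za by (intro order_tendstoD(2)) auto
  have ev1: "eventually (\<lambda>n. 1 \<le> n) sequentially" by (rule eventually_ge_at_top)
  show "eventually (\<lambda>n. root n (real (fp_saw V E rt r n)) < a) sequentially"
    using ev ev1
  proof (rule eventually_elim2)
    fix n :: nat assume an: "root n S * (1 / z) < a" and n: "1 \<le> n"
    have "real (fp_saw V E rt r n) = (\<Sum>j<r. real (A j n))" using saw_sum[OF n] by simp
    also have "\<dots> \<le> (\<Sum>j<r. M j z / (1 + M j z) / (1 - FF z) * (1 / z) ^ n)"
      using upper[OF z(1,2), of n] by (intro sum_mono) auto
    also have "\<dots> = S * (1 / z) ^ n" unfolding S_def by (simp add: sum_distrib_right)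
    finally have le: "real (fp_saw V E rt r n) \<le> S * (1 / z) ^ n" .
    have "root n (S * (1 / z) ^ n) = root n S * (1 / z)"
      using n z by (simp add: real_root_mult real_root_power_cancel)
    moreover have "root n (real (fp_saw V E rt r n)) \<le> root n (S * (1 / z) ^ n)"
      using le n by simp
    ultimately show "root n (real (fp_saw V E rt r n)) < a" using an by simp
  qed
qed

definition PM where "PM i = (\<Sum>n<NN. monom (real (sc i (Suc n))) (Suc n))"

lemma poly_PM: "poly (PM i) z = M i z"
  unfolding PM_def M_def by (simp add: poly_sum poly_monom sum.atLeast1_atMost_eq)

lemma ipoly_PM: "ipoly (PM i)"
  unfolding PM_def by (intro ipoly_sum ipoly_monom) auto

definition QQ where "QQ = (\<Prod>k<r. 1 + PM k) - (\<Sum>i<r. PM i * (\<Prod>j\<in>{..<r}-{i}. 1 + PM j))"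

lemma Dfun_M: "Dfun V E rt r z = (\<Prod>k<r. 1 + M k z) - (\<Sum>i<r. M i z * (\<Prod>j\<in>{..<r} - {i}. 1 + M j z))"
proof -
  have p: "(\<Prod>k<r. 1 + Mgf V E rt k z) = (\<Prod>k<r. 1 + M k z)" by (rule prod.cong) (simp_all add: Mgf_eq)
  have s: "(\<Sum>i<r. Mgf V E rt i z * (\<Prod>j\<in>{..<r} - {i}. 1 + Mgf V E rt j z))
        = (\<Sum>i<r. M i z * (\<Prod>j\<in>{..<r} - {i}. 1 + M j z))"
    by (rule sum.cong) (simp_all add: Mgf_eq)
  show ?thesis unfolding Dfun_def p s ..
qed

lemma poly_QQ: "poly QQ z = Dfun V E rt r z"
  unfolding Dfun_M QQ_def by (simp add: poly_prod poly_sum poly_PM)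

lemma ipoly_QQ: "ipoly QQ"
  unfolding QQ_def
  by (intro ipoly_diff ipoly_prod ipoly_sum ipoly_mult ipoly_add ipoly_1 ipoly_PM) auto

lemma QQ_nz: "QQ \<noteq> 0"
proof
  assume "QQ = 0"
  then have "poly QQ 0 = 0" by simp
  moreover have "poly QQ 0 = 1" unfolding poly_QQ using Dfun_eq[of 0] FF_0 M_0 by simp
  ultimately show False by simp
qed

lemma alg: "algebraic (1 / z0)"
proof (rule algebraicI)
  have z0: "0 < z0" using z0_prop by simp
  show "coeff (reflect_poly QQ) i \<in> \<int>" for i
    using ipoly_QQ unfolding ipoly_def by (simp add: coeff_reflect_poly)
  show "reflect_poly QQ \<noteq> 0"
  proof
    assume "reflect_poly QQ = 0"
    then have "coeff (reflect_poly QQ) 0 = 0" by simp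
    then show False using QQ_nz by simp
  qed
  have "poly (reflect_poly QQ) (1 / z0) = (1 / z0) ^ degree QQ * poly QQ (inverse (1 / z0))"
    using z0 by (intro poly_reflect_poly_nz) simp
  also have "inverse (1 / z0) = z0" by simp
  also have "poly QQ z0 = 0" unfolding poly_QQ by (rule Dfun_z0)
  finally show "poly (reflect_poly QQ) (1 / z0) = 0" by simp
qed

lemma part1:
  assumes i: "i < r"
  shows "\<exists>p :: int poly. degree p \<le> card (V i) - 1 \<and> (\<forall>n. coeff p n \<ge> 0)
                     \<and> (\<forall>z. Mgf V E rt i z = poly (map_poly of_int p) z)"
proof -
  define c where "c = card (V i) - 1"
  define p where "p = (\<Sum>n<c. monom (int (sc i (Suc n))) (Suc n))"
  have "degree p \<le> c" unfolding p_def
    by (rule degree_sum_le) (auto intro: order_trans[OF degree_monom_le])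
  moreover have "\<forall>n. coeff p n \<ge> 0" unfolding p_def coeff_sum by (auto intro!: sum_nonneg simp: coeff_monom)
  moreover have "Mgf V E rt i z = poly (map_poly of_int p) z" for z
  proof -
    have mp: "map_poly of_int p = (\<Sum>n<c. monom (real (sc i (Suc n))) (Suc n))"
      by (rule poly_eqI) (simp add: coeff_map_poly p_def coeff_sum coeff_monom of_int_sum if_distrib cong: if_cong)
    have sc: "saw_count (V i) (E i) (rt i) m = sc i m" for m by (simp add: saw_count_walkset sc_def T_def)
    have "Mgf V E rt i z = (\<Sum>n<c. real (sc i (Suc n)) * z ^ Suc n)"
      unfolding Mgf_def sc
    proof (rule suminf_finite)
      show "finite {..<c}" by simp
      fix n assume "n \<notin> {..<c}"
      then have "card (V i) \<le> Suc n" unfolding c_def by simp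
      then show "real (sc i (Suc n)) * z ^ Suc n = 0" using sc_zero[OF i] by simp
    qed
    also have "\<dots> = poly (map_poly of_int p) z" unfolding mp by (simp add: poly_sum poly_monom)
    finally show ?thesis .
  qed
  ultimately show ?thesis unfolding c_def by blast
qed

end


theorem corollary1:
  fixes V :: "nat \<Rightarrow> 'a set" and E :: "nat \<Rightarrow> 'a \<Rightarrow> 'a \<Rightarrow> bool" and rt :: "nat \<Rightarrow> 'a" and r :: nat
  assumes r2: "r \<ge> 2"
    and fin: "\<And>i. i < r \<Longrightarrow> finite (V i)"
    and card2: "\<And>i. i < r \<Longrightarrow> card (V i) \<ge> 2"
    and root: "\<And>i. i < r \<Longrightarrow> rt i \<in> V i"
    and edges_in: "\<And>i x y. i < r \<Longrightarrow> E i x y \<Longrightarrow> x \<in> V i \<and> y \<in> V i"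
    and sym: "\<And>i x y. i < r \<Longrightarrow> E i x y \<Longrightarrow> E i y x"
    and irrefl: "\<And>i x. i < r \<Longrightarrow> \<not> E i x x"
    and conn: "\<And>i x. i < r \<Longrightarrow> x \<in> V i \<Longrightarrow> (E i)\<^sup>*\<^sup>* (rt i) x"
  shows "(\<forall>i<r. \<exists>p :: int poly. degree p \<le> card (V i) - 1 \<and> (\<forall>n. coeff p n \<ge> 0)
                     \<and> (\<forall>z. Mgf V E rt i z = poly (map_poly of_int p) z))
       \<and> (\<exists>z0 > 0. Dfun V E rt r z0 = 0 \<and> (\<forall>z. 0 < z \<and> z < z0 \<longrightarrow> Dfun V E rt r z \<noteq> 0)
            \<and> convergent (\<lambda>n. root n (real (fp_saw V E rt r n)))
            \<and> 1 / fp_connective_constant V E rt r = z0)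
       \<and> algebraic (fp_connective_constant V E rt r)"
proof -
  interpret F: fp V E rt r
    using r2 fin card2 root edges_in sym irrefl conn by unfold_locales
  have L: "(\<lambda>n. root n (real (fp_saw V E rt r n))) \<longlonglongrightarrow> 1 / F.z0" by (rule F.limit)
  have fcc: "fp_connective_constant V E rt r = 1 / F.z0"
    unfolding fp_connective_constant_def using L by (rule limI)
  have z0: "0 < F.z0" using F.z0_prop by simp
  have P1: "\<forall>i<r. \<exists>p :: int poly. degree p \<le> card (V i) - 1 \<and> (\<forall>n. coeff p n \<ge> 0)
                     \<and> (\<forall>z. Mgf V E rt i z = poly (map_poly of_int p) z)"
    using F.part1 by blast
  have P2: "\<exists>z0 > 0. Dfun V E rt r z0 = 0 \<and> (\<forall>z. 0 < z \<and> z < z0 \<longrightarrow> Dfun V E rt r z \<noteq> 0)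
            \<and> convergent (\<lambda>n. root n (real (fp_saw V E rt r n)))
            \<and> 1 / fp_connective_constant V E rt r = z0"
    using z0 F.Dfun_z0 F.Dfun_nz convergentI[OF L] fcc by (intro exI[of _ F.z0]) auto
  have P3: "algebraic (fp_connective_constant V E rt r)" using F.alg fcc by simp
  show ?thesis using P1 P2 P3 by blast
qed

end
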